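(* Let $k_1,k_2,b_1,b_2,b_3$ be non-zero constants with $b_1\neq b_2$, and let $$f(x,y)=k_1e^{\sqrt2[b_1x+(b_2-b_1)y]}+k_2e^{\frac{1}{\sqrt2}(b_1x+b_3y)}.$$ Consider the constrained system $\ddot x+\frac{f_{,x}}{f}\dot x^2=0$, $\ddot y+\frac{f_{,y}}{f}\dot y^2=0$, $f(x,y)\dot x\dot y=E_0\neq0$ (the non-null geodesics of the metric $\gamma_{12}=\gamma_{21}=f$, $\gamma_{11}=\gamma_{22}=0$). Then $$I_1=f(x,y)^2e^{-\sqrt2b_1x}\dot y^2+\frac{k_1b_1E_0}{b_1-b_2}e^{\sqrt2(b_2-b_1)y}$$ is a first integral of this constrained system.
   Context: A first integral of the constrained system is a function whose time derivative vanishes along every solution of the three displayed equations; the metric is considered where $f\neq0$. *)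

theory Defs
  imports "HOL-Analysis.Analysis"
begin

definition fmet :: "real \<Rightarrow> real \<Rightarrow> real \<Rightarrow> real \<Rightarrow> real \<Rightarrow> real \<Rightarrow> real \<Rightarrow> real" where
  "fmet k1 k2 b1 b2 b3 x y =
     k1 * exp (sqrt 2 * (b1 * x + (b2 - b1) * y)) + k2 * exp ((1 / sqrt 2) * (b1 * x + b3 * y))"

definition I1 :: "real \<Rightarrow> real \<Rightarrow> real \<Rightarrow> real \<Rightarrow> real \<Rightarrow> real \<Rightarrow> real \<Rightarrow> real \<Rightarrow> real \<Rightarrow> real" where
  "I1 k1 k2 b1 b2 b3 E0 x y ydot =
     (fmet k1 k2 b1 b2 b3 x y)\<^sup>2 * exp (- sqrt 2 * b1 * x) * ydot\<^sup>2
     + (k1 * b1 * E0 / (b1 - b2)) * exp (sqrt 2 * (b2 - b1) * y)"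

end

theory Submission
  imports Defs
begin

lemma fy_deriv:
  "deriv (\<lambda>v. fmet k1 k2 b1 b2 b3 X v) Y =
     k1 * exp (sqrt 2 * (b1 * X + (b2 - b1) * Y)) * (sqrt 2 * (b2 - b1))
   + k2 * exp ((1 / sqrt 2) * (b1 * X + b3 * Y)) * ((1 / sqrt 2) * b3)"
  unfolding fmet_def
  apply (rule DERIV_imp_deriv)
  apply (rule derivative_eq_intros refl | simp)+
  done

lemma alg_helper:
  fixes r k1 k2 A B P u v w b1 b2 b3 :: real
  assumes r: "r * r = 2" "r \<noteq> 0" and F: "k1 * A + k2 * B \<noteq> 0"
    and w: "w = - ((k1 * A * (r * (b2 - b1)) + k2 * B * ((1 / r) * b3)) / (k1 * A + k2 * B) * v\<^sup>2)"
  shows "(2 * (k1 * A + k2 * B) * ((k1 * A * (r * b1) + k2 * B * (b1 / r)) * u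
        + (k1 * A * (r * (b2 - b1)) + k2 * B * (b3 / r)) * v)) * P * v\<^sup>2
     + (k1 * A + k2 * B)\<^sup>2 * (P * (- r * b1 * u)) * v\<^sup>2
     + (k1 * A + k2 * B)\<^sup>2 * P * (2 * v * w)
     = r * b1 * k1 * (A * P) * ((k1 * A + k2 * B) * u * v) * v"
proof -
  define F where "F = k1 * A + k2 * B"
  define Q where "Q = k1 * A * (r * (b2 - b1)) + k2 * B * (b3 / r)"
  define G where "G = k1 * A * (r * b1) + k2 * B * (b1 / r)"
  have w': "F * w = - Q * v\<^sup>2" using w F unfolding F_def Q_def by (simp add: field_simps)
  have G: "2 * G - r * b1 * F = r * b1 * k1 * A"
  proof -
    have "2 / r = r" using r by (simp add: field_simps)
    have "2 * (k2 * B * (b1 / r)) = k2 * B * b1 * (2 / r)" by simp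
    then have "2 * (k2 * B * (b1 / r)) = r * b1 * k2 * B" using \<open>2 / r = r\<close> by simp
    then show ?thesis unfolding G_def F_def by (simp add: algebra_simps)
  qed
  have "(2 * F * (G * u + Q * v)) * P * v\<^sup>2 + F\<^sup>2 * (P * (- r * b1 * u)) * v\<^sup>2
     + F\<^sup>2 * P * (2 * v * w) = F * P * u * v\<^sup>2 * (2 * G - r * b1 * F) + 2 * F * P * v * (Q * v\<^sup>2 + F * w)"
    by (simp add: algebra_simps power2_eq_square)
  also have "... = F * P * u * v\<^sup>2 * (r * b1 * k1 * A)" using w' G by simp
  finally show ?thesis unfolding F_def[symmetric] Q_def[symmetric] G_def[symmetric]
    by (simp add: algebra_simps power2_eq_square)
qed

theorem mainTheorem10:
  fixes k1 k2 b1 b2 b3 E0 :: real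
    and x y x' y' x'' y'' :: "real \<Rightarrow> real"
    and T :: "real set"
  assumes "k1 \<noteq> 0" "k2 \<noteq> 0" "b1 \<noteq> 0" "b2 \<noteq> 0" "b3 \<noteq> 0" "b1 \<noteq> b2" "E0 \<noteq> 0"
    and "open T"
    and dx: "\<And>t. t \<in> T \<Longrightarrow> (x has_real_derivative x' t) (at t)"
    and dy: "\<And>t. t \<in> T \<Longrightarrow> (y has_real_derivative y' t) (at t)"
    and ddx: "\<And>t. t \<in> T \<Longrightarrow> (x' has_real_derivative x'' t) (at t)"
    and ddy: "\<And>t. t \<in> T \<Longrightarrow> (y' has_real_derivative y'' t) (at t)"
    and fnz: "\<And>t. t \<in> T \<Longrightarrow> fmet k1 k2 b1 b2 b3 (x t) (y t) \<noteq> 0"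
    and eqx: "\<And>t. t \<in> T \<Longrightarrow>
       x'' t + deriv (\<lambda>u. fmet k1 k2 b1 b2 b3 u (y t)) (x t) / fmet k1 k2 b1 b2 b3 (x t) (y t) * (x' t)\<^sup>2 = 0"
    and eqy: "\<And>t. t \<in> T \<Longrightarrow>
       y'' t + deriv (\<lambda>v. fmet k1 k2 b1 b2 b3 (x t) v) (y t) / fmet k1 k2 b1 b2 b3 (x t) (y t) * (y' t)\<^sup>2 = 0"
    and con: "\<And>t. t \<in> T \<Longrightarrow> fmet k1 k2 b1 b2 b3 (x t) (y t) * x' t * y' t = E0"
  shows "\<forall>t\<in>T. ((\<lambda>s. I1 k1 k2 b1 b2 b3 E0 (x s) (y s) (y' s)) has_real_derivative 0) (at t)"
proof
  fix t assume t: "t \<in> T"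
  define A where "A = exp (sqrt 2 * (b1 * x t + (b2 - b1) * y t))"
  define B where "B = exp ((1 / sqrt 2) * (b1 * x t + b3 * y t))"
  define P where "P = exp (- sqrt 2 * b1 * x t)"
  define C where "C = exp (sqrt 2 * (b2 - b1) * y t)"
  have AP: "A * P = C" unfolding A_def P_def C_def by (simp add: exp_add[symmetric] algebra_simps)
  have f: "fmet k1 k2 b1 b2 b3 (x t) (y t) = k1 * A + k2 * B" unfolding fmet_def A_def B_def by simp
  have s2: "sqrt 2 * sqrt 2 = (2::real)" by simp
  have eqy': "y'' t + (k1 * A * (sqrt 2 * (b2 - b1)) + k2 * B * ((1 / sqrt 2) * b3))
                / (k1 * A + k2 * B) * (y' t)\<^sup>2 = 0"
    using eqy[OF t] unfolding fy_deriv f A_def[symmetric] B_def[symmetric] .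
  have yy: "y'' t = - ((k1 * A * (sqrt 2 * (b2 - b1)) + k2 * B * ((1 / sqrt 2) * b3))
                / (k1 * A + k2 * B) * (y' t)\<^sup>2)"
    using eqy' by linarith
  have fz: "k1 * A + k2 * B \<noteq> 0" using fnz[OF t] f by simp
  have cn: "(k1 * A + k2 * B) * x' t * y' t = E0" using con[OF t] f by simp
  define Dv where "Dv = (2 * (k1 * A + k2 * B) * ((k1 * A * (sqrt 2 * b1) + k2 * B * (b1 / sqrt 2)) * x' t
        + (k1 * A * (sqrt 2 * (b2 - b1)) + k2 * B * (b3 / sqrt 2)) * y' t)) * P * (y' t)\<^sup>2
     + (k1 * A + k2 * B)\<^sup>2 * (P * (- sqrt 2 * b1 * x' t)) * (y' t)\<^sup>2
     + (k1 * A + k2 * B)\<^sup>2 * P * (2 * y' t * y'' t)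
     + (k1 * b1 * E0 / (b1 - b2)) * (C * (sqrt 2 * (b2 - b1) * y' t))"
  have D: "((\<lambda>s. I1 k1 k2 b1 b2 b3 E0 (x s) (y s) (y' s)) has_real_derivative Dv) (at t)"
    unfolding Dv_def
    unfolding I1_def fmet_def
    apply (rule derivative_eq_intros refl dx[OF t] dy[OF t] ddy[OF t])+
    unfolding A_def[symmetric] B_def[symmetric] P_def[symmetric] C_def[symmetric]
    by (simp add: algebra_simps power2_eq_square add_divide_distrib)
  have "Dv = 0"
  proof -
    have "(2 * (k1 * A + k2 * B) * ((k1 * A * (sqrt 2 * b1) + k2 * B * (b1 / sqrt 2)) * x' t
        + (k1 * A * (sqrt 2 * (b2 - b1)) + k2 * B * (b3 / sqrt 2)) * y' t)) * P * (y' t)\<^sup>2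
     + (k1 * A + k2 * B)\<^sup>2 * (P * (- sqrt 2 * b1 * x' t)) * (y' t)\<^sup>2
     + (k1 * A + k2 * B)\<^sup>2 * P * (2 * y' t * y'' t)
     = sqrt 2 * b1 * k1 * (A * P) * ((k1 * A + k2 * B) * x' t * y' t) * y' t"
      by (rule alg_helper[OF s2 _ fz yy]) simp
    also have "... = sqrt 2 * b1 * k1 * C * E0 * y' t" using AP cn by simp
    finally have L: "(2 * (k1 * A + k2 * B) * ((k1 * A * (sqrt 2 * b1) + k2 * B * (b1 / sqrt 2)) * x' t
        + (k1 * A * (sqrt 2 * (b2 - b1)) + k2 * B * (b3 / sqrt 2)) * y' t)) * P * (y' t)\<^sup>2
     + (k1 * A + k2 * B)\<^sup>2 * (P * (- sqrt 2 * b1 * x' t)) * (y' t)\<^sup>2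
     + (k1 * A + k2 * B)\<^sup>2 * P * (2 * y' t * y'' t) = sqrt 2 * b1 * k1 * C * E0 * y' t" .
    have R: "(k1 * b1 * E0 / (b1 - b2)) * (C * (sqrt 2 * (b2 - b1) * y' t)) = - (sqrt 2 * b1 * k1 * C * E0 * y' t)"
      using assms(6) by (simp add: field_simps)
    show ?thesis using L R unfolding Dv_def by linarith
  qed
  then show "((\<lambda>s. I1 k1 k2 b1 b2 b3 E0 (x s) (y s) (y' s)) has_real_derivative 0) (at t)"
    using D by simp
qed

end
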